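(* Let $P_{XY}$ be a probability distribution on $\mathcal X\times\mathcal Y$ and $P'_{X'Y'}$ one on $\mathcal X'\times\mathcal Y'$ (finite sets), and let $(X,X')$ and $(Y,Y')$ be jointly distributed according to $P_{XY}\times P'_{X'Y'}$. Then $U(XX';YY')=U(X;Y)+U(X';Y')$.
   Context: $D(P\|Q)=\sum P\log(P/Q)$ ($0\log(0/q)=0$; $+\infty$ if $P\not\ll Q$). For a joint distribution $P_{AB}$ with $A$-marginal $P_A$, $U(A;B)=\min_{Q_B}D(P_A\times Q_B\|P_{AB})$; here $U(XX';YY')$ means this quantity with $A=(X,X')$, $B=(Y,Y')$. *)

theory Defs
  imports "HOL-Analysis.Analysis"
begin

definition is_dist :: "('a::finite \<Rightarrow> real) \<Rightarrow> bool" where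
  "is_dist P \<longleftrightarrow> (\<forall>x. 0 \<le> P x) \<and> (\<Sum>x\<in>UNIV. P x) = 1"

definition KL :: "('a::finite \<Rightarrow> real) \<Rightarrow> ('a \<Rightarrow> real) \<Rightarrow> ereal" where
  "KL P Q = (if \<forall>x. P x \<noteq> 0 \<longrightarrow> Q x \<noteq> 0
     then ereal (\<Sum>x\<in>UNIV. if P x = 0 then 0 else P x * ln (P x / Q x))
     else \<infinity>)"

definition margA :: "('a::finite \<times> 'b::finite \<Rightarrow> real) \<Rightarrow> 'a \<Rightarrow> real" where
  "margA P a = (\<Sum>b\<in>UNIV. P (a, b))"

definition U :: "('a::finite \<times> 'b::finite \<Rightarrow> real) \<Rightarrow> ereal" where
  "U P = (INF Q \<in> {Q :: 'b \<Rightarrow> real. is_dist Q}. KL (\<lambda>(a, b). margA P a * Q b) P)"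

end

theory Submission
  imports Defs
begin

lemma sum_UNIV_prod: "(\<Sum>z\<in>(UNIV::('a::finite\<times>'b::finite) set). f z) = (\<Sum>a\<in>UNIV. \<Sum>b\<in>UNIV. f (a,b))"
  by (metis UNIV_Times_UNIV sum.cartesian_product')

definition cnd :: "('a::finite \<times> 'b::finite \<Rightarrow> real) \<Rightarrow> 'b \<Rightarrow> bool" where
  "cnd P b = (\<forall>a. margA P a \<noteq> 0 \<longrightarrow> P (a,b) \<noteq> 0)"
definition LL :: "('a::finite \<times> 'b::finite \<Rightarrow> real) \<Rightarrow> 'b \<Rightarrow> real" where
  "LL P b = (\<Sum>a\<in>{a. margA P a \<noteq> 0}. margA P a * ln (P (a,b) / margA P a))"
definition gg :: "('a::finite \<times> 'b::finite \<Rightarrow> real) \<Rightarrow> 'b \<Rightarrow> real" where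
  "gg P b = (if cnd P b then exp (LL P b) else 0)"
definition ZZ :: "('a::finite \<times> 'b::finite \<Rightarrow> real) \<Rightarrow> real" where
  "ZZ P = (\<Sum>b\<in>UNIV. gg P b)"

lemma gg_nonneg: "gg P b \<ge> 0" by (simp add: gg_def)
lemma ZZ_nonneg: "ZZ P \<ge> 0" unfolding ZZ_def by (simp add: gg_nonneg sum_nonneg)

lemma dist_nonneg: "is_dist P \<Longrightarrow> P z \<ge> 0" by (simp add: is_dist_def)

lemma margA_nonneg: "is_dist P \<Longrightarrow> margA P a \<ge> 0"
  unfolding margA_def by (simp add: dist_nonneg sum_nonneg)

lemma sum_margA: "is_dist P \<Longrightarrow> (\<Sum>a\<in>UNIV. margA P a) = 1"
  unfolding margA_def using sum_UNIV_prod[of P] by (simp add: is_dist_def)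

lemma margA_zero: assumes "is_dist P" "margA P a = 0" shows "P (a,b) = 0"
proof -
  have "\<forall>b\<in>UNIV. P (a,b) = 0"
    using assms sum_nonneg_eq_0_iff[of UNIV "\<lambda>b. P (a,b)"] dist_nonneg[OF assms(1)]
    unfolding margA_def by auto
  thus ?thesis by simp
qed

lemma sum_supp: "(\<Sum>a\<in>{a. f a \<noteq> 0}. f a) = (\<Sum>a\<in>UNIV. (f (a::'a::finite)::real))"
  by (rule sum.mono_neutral_left) auto

lemma sum_margA_supp: "is_dist P \<Longrightarrow> (\<Sum>a\<in>{a. margA P a \<noteq> 0}. margA P a) = 1"
  using sum_supp[of "margA P"] sum_margA by simp

lemma KL_eval:
  assumes P: "is_dist P" and Q: "is_dist Q"
  shows "KL (\<lambda>(a, b). margA P a * Q b) P =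
    (if \<forall>b. Q b \<noteq> 0 \<longrightarrow> cnd P b
     then ereal (\<Sum>b\<in>UNIV. if Q b = 0 then 0 else Q b * (ln (Q b) - LL P b)) else \<infinity>)"
proof -
  have ac: "(\<forall>z. (\<lambda>(a, b). margA P a * Q b) z \<noteq> 0 \<longrightarrow> P z \<noteq> 0) = (\<forall>b. Q b \<noteq> 0 \<longrightarrow> cnd P b)"
    unfolding cnd_def by auto
  show ?thesis
  proof (cases "\<forall>b. Q b \<noteq> 0 \<longrightarrow> cnd P b")
    case False thus ?thesis unfolding KL_def using ac by auto
  next
    case True
    have inner: "(\<Sum>a\<in>UNIV. if margA P a * Q b = 0 then 0
          else margA P a * Q b * ln (margA P a * Q b / P (a, b)))
        = (if Q b = 0 then 0 else Q b * (ln (Q b) - LL P b))" for b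
    proof (cases "Q b = 0")
      case True thus ?thesis by simp
    next
      case False
      have Qp: "Q b > 0" using False dist_nonneg[OF Q] by (simp add: less_le)
      have cb: "cnd P b" using True False by auto
      have "(\<Sum>a\<in>UNIV. if margA P a * Q b = 0 then 0
          else margA P a * Q b * ln (margA P a * Q b / P (a, b)))
        = (\<Sum>a\<in>UNIV. if margA P a \<noteq> 0 then Q b * (margA P a * ln (Q b) - margA P a * ln (P (a,b) / margA P a)) else 0)"
      proof (rule sum.cong)
        fix a
        show "(if margA P a * Q b = 0 then 0
          else margA P a * Q b * ln (margA P a * Q b / P (a, b))) =
         (if margA P a \<noteq> 0 then Q b * (margA P a * ln (Q b) - margA P a * ln (P (a,b) / margA P a)) else 0)"
        proof (cases "margA P a = 0")
          case True thus ?thesis by simp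
        next
          case F: False
          have mp: "margA P a > 0" using F margA_nonneg[OF P] by (simp add: less_le)
          have pp: "P (a,b) > 0" using cb F dist_nonneg[OF P] unfolding cnd_def by (simp add: less_le)
          have l1: "ln (margA P a * Q b / P (a, b)) = ln (Q b) - ln (P (a,b) / margA P a)"
            using mp pp Qp by (simp add: ln_div ln_mult)
          have e: "margA P a * Q b * ln (margA P a * Q b / P (a, b)) = Q b * (margA P a * ln (Q b) - margA P a * ln (P (a,b) / margA P a))"
            unfolding l1 by (simp add: algebra_simps)
          have c: "margA P a * Q b \<noteq> 0" using F Qp by simp
          show ?thesis using c F e by (simp only: if_False not_False_eq_True if_True)
        qed
      qed simp
      also have "\<dots> = (\<Sum>a\<in>{a. margA P a \<noteq> 0}. Q b * (margA P a * ln (Q b) - margA P a * ln (P (a,b) / margA P a)))"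
        by (simp add: sum.inter_filter[symmetric])
      also have "\<dots> = Q b * (ln (Q b) * (\<Sum>a\<in>{a. margA P a \<noteq> 0}. margA P a) - LL P b)"
      proof -
        have s: "(\<Sum>a\<in>{a. margA P a \<noteq> 0}. margA P a * ln (Q b)) = ln (Q b) * (\<Sum>a\<in>{a. margA P a \<noteq> 0}. margA P a)"
          by (subst sum_distrib_left) (simp add: mult.commute)
        show ?thesis
          unfolding LL_def by (simp add: sum_distrib_left[symmetric] sum_subtractf s)
      qed
      also have "\<dots> = Q b * (ln (Q b) - LL P b)" using sum_margA_supp[OF P] by simp
      finally show ?thesis using False by simp
    qed
    have "(\<Sum>z\<in>UNIV. if (case z of (a, b) \<Rightarrow> margA P a * Q b) = 0 then 0
            else (case z of (a, b) \<Rightarrow> margA P a * Q b) * ln ((case z of (a, b) \<Rightarrow> margA P a * Q b) / P z))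
        = (\<Sum>b\<in>UNIV. \<Sum>a\<in>UNIV. if margA P a * Q b = 0 then 0
          else margA P a * Q b * ln (margA P a * Q b / P (a, b)))"
      unfolding sum_UNIV_prod split_conv by (rule sum.swap)
    also have "\<dots> = (\<Sum>b\<in>UNIV. if Q b = 0 then 0 else Q b * (ln (Q b) - LL P b))"
      using inner by simp
    finally show ?thesis unfolding KL_def using ac True by simp
  qed
qed

lemma gg_pos: "cnd P b \<Longrightarrow> gg P b = exp (LL P b)" by (simp add: gg_def)

lemma lower:
  assumes P: "is_dist P" and Q: "is_dist Q" and acc: "\<forall>b. Q b \<noteq> 0 \<longrightarrow> cnd P b"
    and Z: "ZZ P > 0"
  shows "(\<Sum>b\<in>UNIV. if Q b = 0 then 0 else Q b * (ln (Q b) - LL P b)) \<ge> - ln (ZZ P)"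
proof -
  have pt: "(if Q b = 0 then 0 else Q b * (ln (Q b) - LL P b)) \<ge> Q b - gg P b / ZZ P - Q b * ln (ZZ P)" for b
  proof (cases "Q b = 0")
    case True thus ?thesis using gg_nonneg[of P b] Z by simp
  next
    case False
    have Qp: "Q b > 0" using False dist_nonneg[OF Q] by (simp add: less_le)
    have g: "gg P b = exp (LL P b)" using acc False gg_pos by auto
    define x where "x = Q b * ZZ P / gg P b"
    have xp: "x > 0" unfolding x_def g using Qp Z by simp
    have lnx: "ln x = ln (Q b) + ln (ZZ P) - LL P b" unfolding x_def g using Qp Z
      by (simp add: ln_div ln_mult)
    have "ln (1/x) \<le> 1/x - 1" using xp by (intro ln_le_minus_one) simp
    hence "- ln x \<le> 1/x - 1" using xp by (simp add: ln_div)
    hence "Q b * (- ln x) \<le> Q b * (1/x - 1)" using Qp by (intro mult_left_mono) auto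
    moreover have "Q b * (1/x) = gg P b / ZZ P" unfolding x_def g using Qp Z by simp
    ultimately show ?thesis using False lnx by (simp add: algebra_simps)
  qed
  have "(\<Sum>b\<in>UNIV. if Q b = 0 then 0 else Q b * (ln (Q b) - LL P b))
      \<ge> (\<Sum>b\<in>UNIV. Q b - gg P b / ZZ P - Q b * ln (ZZ P))"
    by (rule sum_mono) (use pt in auto)
  also have "(\<Sum>b\<in>UNIV. Q b - gg P b / ZZ P - Q b * ln (ZZ P)) = 1 - ZZ P / ZZ P - ln (ZZ P)"
    using Q unfolding is_dist_def ZZ_def
    by (simp add: sum_subtractf sum_divide_distrib[symmetric] sum_distrib_right[symmetric])
  finally show ?thesis using Z by simp
qed

lemma U_closed:
  assumes P: "is_dist (P :: 'a::finite \<times> 'b::finite \<Rightarrow> real)"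
  shows "U P = (if ZZ P = 0 then \<infinity> else ereal (- ln (ZZ P)))"
proof (cases "ZZ P = 0")
  case True
  have g0: "gg P b = 0" for b
  proof -
    have "\<forall>b\<in>UNIV. gg P b = 0"
      using True sum_nonneg_eq_0_iff[of UNIV "gg P"] unfolding ZZ_def by (simp add: gg_nonneg)
    thus ?thesis by simp
  qed
  have kinf: "KL (\<lambda>(a, b). margA P a * Q b) P = \<infinity>" if Q: "is_dist Q" for Q :: "'b \<Rightarrow> real"
  proof -
    have "\<exists>b. Q b \<noteq> 0"
    proof (rule ccontr)
      assume "\<not> (\<exists>b. Q b \<noteq> 0)"
      hence "Q = (\<lambda>_. 0)" by auto
      thus False using Q by (simp add: is_dist_def)
    qed
    then obtain b where "Q b \<noteq> 0" by blast
    moreover have "\<not> cnd P b" using g0[of b] unfolding gg_def by (auto split: if_splits)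
    ultimately show ?thesis using KL_eval[OF P Q] by auto
  qed
  have "U P \<ge> \<infinity>" unfolding U_def
    by (rule INF_greatest) (simp add: kinf)
  hence "U P = \<infinity>" by simp
  thus ?thesis using True by simp
next
  case False
  hence Z: "ZZ P > 0" using ZZ_nonneg[of P] by simp
  have ge: "U P \<ge> ereal (- ln (ZZ P))" unfolding U_def
  proof (rule INF_greatest)
    fix Q :: "'b \<Rightarrow> real" assume "Q \<in> {Q. is_dist Q}"
    hence Q: "is_dist Q" by simp
    show "ereal (- ln (ZZ P)) \<le> KL (\<lambda>(a, b). margA P a * Q b) P"
      using KL_eval[OF P Q] lower[OF P Q _ Z] by auto
  qed
  define Qs where "Qs b = gg P b / ZZ P" for b
  have Qs: "is_dist Qs" unfolding is_dist_def Qs_def using Z gg_nonneg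
    by (simp add: sum_divide_distrib[symmetric] ZZ_def[symmetric] gg_nonneg)
  have acs: "\<forall>b. Qs b \<noteq> 0 \<longrightarrow> cnd P b" unfolding Qs_def gg_def by auto
  have "(\<Sum>b\<in>UNIV. if Qs b = 0 then 0 else Qs b * (ln (Qs b) - LL P b))
      = (\<Sum>b\<in>UNIV. Qs b * (- ln (ZZ P)))"
  proof (rule sum.cong)
    fix b
    show "(if Qs b = 0 then 0 else Qs b * (ln (Qs b) - LL P b)) = Qs b * (- ln (ZZ P))"
    proof (cases "Qs b = 0")
      case False
      hence "cnd P b" using acs by auto
      hence "Qs b = exp (LL P b) / ZZ P" unfolding Qs_def by (simp add: gg_def)
      hence "ln (Qs b) = LL P b - ln (ZZ P)" using Z by (simp add: ln_div)
      thus ?thesis using False by simp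
    qed simp
  qed simp
  also have "\<dots> = - ln (ZZ P)" using Qs unfolding is_dist_def
    by (simp add: sum_distrib_right[symmetric] sum_negf)
  finally have "KL (\<lambda>(a, b). margA P a * Qs b) P = ereal (- ln (ZZ P))"
    using KL_eval[OF P Qs] acs by simp
  hence "U P \<le> ereal (- ln (ZZ P))" unfolding U_def
    by (intro INF_lower2[of Qs]) (simp_all add: Qs)
  thus ?thesis using ge False by simp
qed



lemma ex_supp: "is_dist P \<Longrightarrow> \<exists>a. margA P a \<noteq> 0"
  using sum_margA[of P] by (metis sum.neutral zero_neq_one)

context
  fixes P :: "'x::finite \<times> 'y::finite \<Rightarrow> real"
    and P' :: "'x'::finite \<times> 'y'::finite \<Rightarrow> real"
  assumes P: "is_dist P" and P': "is_dist P'"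
begin

definition "RR = (\<lambda>((x, x'), (y, y')). P (x, y) * P' (x', y'))"

lemma margA_RR: "margA RR (x, x') = margA P x * margA P' x'"
  unfolding margA_def RR_def sum_UNIV_prod by (simp add: sum_product)

lemma dist_RR: "is_dist RR"
proof -
  have "(\<Sum>z\<in>UNIV. RR z) = (\<Sum>x\<in>UNIV. \<Sum>x'\<in>UNIV. margA RR (x,x'))"
    unfolding margA_def sum_UNIV_prod by simp
  also have "\<dots> = (\<Sum>x\<in>UNIV. margA P x) * (\<Sum>x'\<in>UNIV. margA P' x')"
    by (simp add: margA_RR sum_product)
  also have "\<dots> = 1" using sum_margA[OF P] sum_margA[OF P'] by simp
  finally show ?thesis unfolding is_dist_def using P P'
    by (auto simp: RR_def is_dist_def split: prod.splits)
qed

lemma cnd_RR: "cnd RR (y, y') = (cnd P y \<and> cnd P' y')"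
proof
  assume c: "cnd RR (y, y')"
  obtain x0 where x0: "margA P x0 \<noteq> 0" using ex_supp[OF P] by blast
  obtain x0' where x0': "margA P' x0' \<noteq> 0" using ex_supp[OF P'] by blast
  show "cnd P y \<and> cnd P' y'"
  proof
    show "cnd P y" unfolding cnd_def
    proof (intro allI impI)
      fix x assume "margA P x \<noteq> 0"
      hence "RR ((x, x0'), (y, y')) \<noteq> 0" using c x0' unfolding cnd_def margA_RR
        by (metis mult_eq_0_iff margA_RR)
      thus "P (x, y) \<noteq> 0" by (simp add: RR_def)
    qed
    show "cnd P' y'" unfolding cnd_def
    proof (intro allI impI)
      fix x' assume "margA P' x' \<noteq> 0"
      hence "RR ((x0, x'), (y, y')) \<noteq> 0" using c x0 unfolding cnd_def
        by (metis mult_eq_0_iff margA_RR)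
      thus "P' (x', y') \<noteq> 0" by (simp add: RR_def)
    qed
  qed
next
  assume c: "cnd P y \<and> cnd P' y'"
  show "cnd RR (y, y')" unfolding cnd_def
  proof (intro allI impI)
    fix a :: "'x \<times> 'x'"
    obtain x x' where a: "a = (x, x')" by (cases a)
    assume "margA RR a \<noteq> 0"
    hence "margA P x \<noteq> 0" "margA P' x' \<noteq> 0" by (simp_all add: a margA_RR)
    thus "RR (a, (y, y')) \<noteq> 0" using c by (simp add: a RR_def cnd_def)
  qed
qed

lemma LL_RR:
  assumes c: "cnd P y" "cnd P' y'"
  shows "LL RR (y, y') = LL P y + LL P' y'"
proof -
  let ?S = "{x. margA P x \<noteq> 0}" and ?S' = "{x'. margA P' x' \<noteq> 0}"
  have SS: "{a. margA RR a \<noteq> 0} = ?S \<times> ?S'" by (auto simp: margA_RR)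
  have tm: "margA RR (x, x') * ln (RR ((x, x'), (y, y')) / margA RR (x, x'))
      = margA P' x' * (margA P x * ln (P (x, y) / margA P x))
        + margA P x * (margA P' x' * ln (P' (x', y') / margA P' x'))"
    if "x \<in> ?S" "x' \<in> ?S'" for x x'
  proof -
    have m: "margA P x > 0" "margA P' x' > 0"
      using that margA_nonneg[OF P, of x] margA_nonneg[OF P', of x'] by (auto simp: less_le)
    have p: "P (x, y) > 0" "P' (x', y') > 0"
      using that c dist_nonneg[OF P, of "(x,y)"] dist_nonneg[OF P', of "(x',y')"]
      unfolding cnd_def by (auto simp: less_le)
    have "ln (RR ((x, x'), (y, y')) / margA RR (x, x'))
        = ln (P (x, y) / margA P x) + ln (P' (x', y') / margA P' x')"
    proof -
      have "RR ((x, x'), (y, y')) / margA RR (x, x') = (P (x, y) / margA P x) * (P' (x', y') / margA P' x')"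
        unfolding margA_RR by (simp add: RR_def)
      moreover have "ln ((P (x, y) / margA P x) * (P' (x', y') / margA P' x')) = ln (P (x, y) / margA P x) + ln (P' (x', y') / margA P' x')"
        using m p by (subst ln_mult) simp
      ultimately show ?thesis by simp
    qed
    thus ?thesis by (simp add: margA_RR algebra_simps)
  qed
  have "LL RR (y, y') = (\<Sum>x\<in>?S. \<Sum>x'\<in>?S'. margA RR (x, x') * ln (RR ((x, x'), (y, y')) / margA RR (x, x')))"
    unfolding LL_def SS sum.cartesian_product' by simp
  also have "\<dots> = (\<Sum>x\<in>?S. \<Sum>x'\<in>?S'. margA P' x' * (margA P x * ln (P (x, y) / margA P x))
        + margA P x * (margA P' x' * ln (P' (x', y') / margA P' x')))"
    by (intro sum.cong refl) (simp add: tm)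
  also have "\<dots> = (\<Sum>x\<in>?S. (\<Sum>x'\<in>?S'. margA P' x') * (margA P x * ln (P (x, y) / margA P x))
        + margA P x * LL P' y')"
    unfolding LL_def by (simp add: sum.distrib sum_distrib_left sum_distrib_right)
  also have "\<dots> = LL P y + LL P' y'"
    unfolding sum_margA_supp[OF P'] 
    by (simp add: sum.distrib sum_distrib_right[symmetric] sum_margA_supp[OF P] LL_def[of P y, symmetric])
  finally show ?thesis .
qed

lemma gg_RR: "gg RR (y, y') = gg P y * gg P' y'"
  by (simp add: gg_def cnd_RR LL_RR exp_add)

lemma ZZ_RR: "ZZ RR = ZZ P * ZZ P'"
  unfolding ZZ_def sum_UNIV_prod gg_RR by (simp add: sum_product)

end

theorem mainTheorem9:
  fixes P :: "'x::finite \<times> 'y::finite \<Rightarrow> real"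
    and P' :: "'x'::finite \<times> 'y'::finite \<Rightarrow> real"
  assumes "is_dist P" and "is_dist P'"
  shows "U (\<lambda>((x, x'), (y, y')). P (x, y) * P' (x', y')) = U P + U P'"
proof -
  have R: "(\<lambda>((x, x'), (y, y')). P (x, y) * P' (x', y')) = RR P P'" using assms by (simp add: RR_def)
  have Z: "ZZ P \<ge> 0" "ZZ P' \<ge> 0" by (simp_all add: ZZ_nonneg)
  show ?thesis
    unfolding R U_closed[OF dist_RR[OF assms]] U_closed[OF assms(1)] U_closed[OF assms(2)]
      ZZ_RR[OF assms]
    using Z by (auto simp: ln_mult)
qed

end
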